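(* Let $F_1,F_2\colon\mathbf{A}\to\mathbf{B}$ be lenses, and let $E\colon\mathbf{B}\to\mathbf{C}$ be a lens with $E\circ F_1=E\circ F_2$ such that the get functor $UE$ is a coequaliser of $UF_1$ and $UF_2$ in $\mathbf{Cat}$. Then $E$ is a coequaliser of $F_1$ and $F_2$ in $\mathbf{Lens}$ if and only if for all lenses $G\colon\mathbf{B}\to\mathbf{D}$ with $G\circ F_1=G\circ F_2$, all objects $B$ of $\mathbf{B}$ and all morphisms $d$ of $\mathbf{D}$ with domain $GB$, we have $\varphi_{G,B}(d)=\varphi_{E,B}\big(E\,\varphi_{G,B}(d)\big)$.
   Context: A lens $F\colon \mathbf{A}\to\mathbf{B}$ between small categories consists of a functor $F\colon\mathbf{A}\to\mathbf{B}$ (the get functor) together with, for each object $A$ of $\mathbf{A}$, a function $\varphi_{F,A}$ from the set of morphisms of $\mathbf{B}$ with domain $FA$ to the set of morphisms of $\mathbf{A}$ with domain $A$, such that: $F(\varphi_{F,A}b)=b$; $\varphi_{F,A}(\mathrm{id}_{FA})=\mathrm{id}_A$; and $\varphi_{F,A}(b'\circ b)=\varphi_{F,A'}(b')\circ\varphi_{F,A}(b)$ whenever $b$ has domain $FA$, $A'$ is the codomain of $\varphi_{F,A}b$, and $b'$ has domain $FA'$. $\mathbf{Lens}$ is the category of small categories and lenses, with composite of $F\colon\mathbf{A}\to\mathbf{B}$, $G\colon\mathbf{B}\to\mathbf{C}$ having get functor $G\circ F$ and puts $\varphi_{G\circ F,A}(c)=\varphi_{F,A}(\varphi_{G,FA}(c))$.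 $U\colon\mathbf{Lens}\to\mathbf{Cat}$ sends a lens to its get functor. *)

theory Defs
  imports Main
begin

text \<open>Small categories, given by explicit carrier sets of objects and morphisms.
  Cmp g f is the composite g after f (defined when Cod f = Dom g).\<close>
record ('o,'m) category =
  Obj :: "'o set"
  Arr :: "'m set"
  Dom :: "'m \<Rightarrow> 'o"
  Cod :: "'m \<Rightarrow> 'o"
  Idt :: "'o \<Rightarrow> 'm"
  Cmp :: "'m \<Rightarrow> 'm \<Rightarrow> 'm"

definition is_category :: "('o,'m) category \<Rightarrow> bool" where
  "is_category X \<longleftrightarrow>
     (\<forall>f\<in>Arr X. Dom X f \<in> Obj X \<and> Cod X f \<in> Obj X) \<and>
     (\<forall>a\<in>Obj X. Idt X a \<in> Arr X \<and> Dom X (Idt X a) = a \<and> Cod X (Idt X a) = a) \<and>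
     (\<forall>f\<in>Arr X. \<forall>g\<in>Arr X. Cod X f = Dom X g \<longrightarrow>
        Cmp X g f \<in> Arr X \<and> Dom X (Cmp X g f) = Dom X f \<and> Cod X (Cmp X g f) = Cod X g) \<and>
     (\<forall>f\<in>Arr X. Cmp X f (Idt X (Dom X f)) = f \<and> Cmp X (Idt X (Cod X f)) f = f) \<and>
     (\<forall>f\<in>Arr X. \<forall>g\<in>Arr X. \<forall>h\<in>Arr X. Cod X f = Dom X g \<longrightarrow> Cod X g = Dom X h \<longrightarrow>
        Cmp X h (Cmp X g f) = Cmp X (Cmp X h g) f)"

text \<open>Functors: object and morphism maps (only their values on the carriers matter).\<close>
record ('oa,'ma,'ob,'mb) funct =
  fobj :: "'oa \<Rightarrow> 'ob"
  farr :: "'ma \<Rightarrow> 'mb"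

definition is_functor ::
  "('oa,'ma) category \<Rightarrow> ('ob,'mb) category \<Rightarrow> ('oa,'ma,'ob,'mb,'z) funct_scheme \<Rightarrow> bool" where
  "is_functor X Y F \<longleftrightarrow>
     (\<forall>a\<in>Obj X. fobj F a \<in> Obj Y) \<and>
     (\<forall>f\<in>Arr X. farr F f \<in> Arr Y \<and> Dom Y (farr F f) = fobj F (Dom X f)
                                    \<and> Cod Y (farr F f) = fobj F (Cod X f)) \<and>
     (\<forall>a\<in>Obj X. farr F (Idt X a) = Idt Y (fobj F a)) \<and>
     (\<forall>f\<in>Arr X. \<forall>g\<in>Arr X. Cod X f = Dom X g \<longrightarrow>
        farr F (Cmp X g f) = Cmp Y (farr F g) (farr F f))"

definition functor_eq ::
  "('oa,'ma) category \<Rightarrow> ('ob,'mb) category \<Rightarrow> ('oa,'ma,'ob,'mb,'z) funct_scheme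
     \<Rightarrow> ('oa,'ma,'ob,'mb,'w) funct_scheme \<Rightarrow> bool" where
  "functor_eq X Y F G \<longleftrightarrow>
     (\<forall>a\<in>Obj X. fobj F a = fobj G a) \<and> (\<forall>f\<in>Arr X. farr F f = farr G f)"

definition functor_comp ::
  "('ob,'mb,'oc,'mc,'z) funct_scheme \<Rightarrow> ('oa,'ma,'ob,'mb,'w) funct_scheme
     \<Rightarrow> ('oa,'ma,'oc,'mc) funct" where
  "functor_comp G F = \<lparr>fobj = fobj G \<circ> fobj F, farr = farr G \<circ> farr F\<rparr>"

text \<open>Lenses: a get functor together with the put (lifting) operation
  put A b = phi_{F,A}(b).\<close>
record ('oa,'ma,'ob,'mb) lens = "('oa,'ma,'ob,'mb) funct" +
  put :: "'oa \<Rightarrow> 'mb \<Rightarrow> 'ma"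

definition is_lens ::
  "('oa,'ma) category \<Rightarrow> ('ob,'mb) category \<Rightarrow> ('oa,'ma,'ob,'mb) lens \<Rightarrow> bool" where
  "is_lens X Y L \<longleftrightarrow>
     is_functor X Y L \<and>
     (\<forall>a\<in>Obj X. \<forall>b\<in>Arr Y. Dom Y b = fobj L a \<longrightarrow>
        put L a b \<in> Arr X \<and> Dom X (put L a b) = a \<and> farr L (put L a b) = b) \<and>
     (\<forall>a\<in>Obj X. put L a (Idt Y (fobj L a)) = Idt X a) \<and>
     (\<forall>a\<in>Obj X. \<forall>b\<in>Arr Y. \<forall>b'\<in>Arr Y.
        Dom Y b = fobj L a \<longrightarrow> Dom Y b' = fobj L (Cod X (put L a b)) \<longrightarrow>
        put L a (Cmp Y b' b) = Cmp X (put L (Cod X (put L a b)) b') (put L a b))"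

definition lens_eq ::
  "('oa,'ma) category \<Rightarrow> ('ob,'mb) category \<Rightarrow> ('oa,'ma,'ob,'mb) lens
     \<Rightarrow> ('oa,'ma,'ob,'mb) lens \<Rightarrow> bool" where
  "lens_eq X Y L M \<longleftrightarrow>
     functor_eq X Y L M \<and>
     (\<forall>a\<in>Obj X. \<forall>b\<in>Arr Y. Dom Y b = fobj L a \<longrightarrow> put L a b = put M a b)"

definition lens_comp ::
  "('ob,'mb,'oc,'mc) lens \<Rightarrow> ('oa,'ma,'ob,'mb) lens \<Rightarrow> ('oa,'ma,'oc,'mc) lens" where
  "lens_comp G F = \<lparr>fobj = fobj G \<circ> fobj F, farr = farr G \<circ> farr F,
                    put = (\<lambda>a c. put F a (put G (fobj F a) c))\<rparr>"

definition U :: "('oa,'ma,'ob,'mb) lens \<Rightarrow> ('oa,'ma,'ob,'mb) funct" where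
  "U L = \<lparr>fobj = fobj L, farr = farr L\<rparr>"

text \<open>E is a coequaliser of F1, F2 in Cat, with respect to test categories whose
  objects and morphisms live in the types 'do and 'dm.\<close>
definition cat_coequaliser ::
  "'do itself \<Rightarrow> 'dm itself \<Rightarrow> ('oa,'ma) category \<Rightarrow> ('ob,'mb) category \<Rightarrow> ('oc,'mc) category
   \<Rightarrow> ('oa,'ma,'ob,'mb) funct \<Rightarrow> ('oa,'ma,'ob,'mb) funct \<Rightarrow> ('ob,'mb,'oc,'mc) funct \<Rightarrow> bool" where
  "cat_coequaliser _ _ X Y Z F1 F2 E \<longleftrightarrow>
     is_functor Y Z E \<and> functor_eq X Z (functor_comp E F1) (functor_comp E F2) \<and>
     (\<forall>(D :: ('do,'dm) category) (G :: ('ob,'mb,'do,'dm) funct).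
        is_category D \<and> is_functor Y D G \<and> functor_eq X D (functor_comp G F1) (functor_comp G F2) \<longrightarrow>
        (\<exists>K :: ('oc,'mc,'do,'dm) funct. is_functor Z D K \<and> functor_eq Y D (functor_comp K E) G \<and>
           (\<forall>K' :: ('oc,'mc,'do,'dm) funct. is_functor Z D K' \<and> functor_eq Y D (functor_comp K' E) G
              \<longrightarrow> functor_eq Z D K' K)))"

definition lens_coequaliser ::
  "'do itself \<Rightarrow> 'dm itself \<Rightarrow> ('oa,'ma) category \<Rightarrow> ('ob,'mb) category \<Rightarrow> ('oc,'mc) category
   \<Rightarrow> ('oa,'ma,'ob,'mb) lens \<Rightarrow> ('oa,'ma,'ob,'mb) lens \<Rightarrow> ('ob,'mb,'oc,'mc) lens \<Rightarrow> bool" where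
  "lens_coequaliser _ _ X Y Z F1 F2 E \<longleftrightarrow>
     is_lens Y Z E \<and> lens_eq X Z (lens_comp E F1) (lens_comp E F2) \<and>
     (\<forall>(D :: ('do,'dm) category) (G :: ('ob,'mb,'do,'dm) lens).
        is_category D \<and> is_lens Y D G \<and> lens_eq X D (lens_comp G F1) (lens_comp G F2) \<longrightarrow>
        (\<exists>K :: ('oc,'mc,'do,'dm) lens. is_lens Z D K \<and> lens_eq Y D (lens_comp K E) G \<and>
           (\<forall>K' :: ('oc,'mc,'do,'dm) lens. is_lens Z D K' \<and> lens_eq Y D (lens_comp K' E) G
              \<longrightarrow> lens_eq Z D K' K)))"

end

theory Submission imports Defs begin

definition bo :: "bool \<Rightarrow> 'a set" where "bo x = (if x then UNIV else {})"
definition code :: "bool \<Rightarrow> bool \<Rightarrow> 'm list set" where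
  "code p q = {xs. (xs = [] \<and> p) \<or> (xs = [undefined] \<and> q)}"

lemma code_mem[simp]: "([] \<in> code p q) = p" "([undefined] \<in> code p q) = q"
  by (auto simp: code_def)
lemma bo_ne[simp]: "(bo x = UNIV) = x" "(bo x = {}) = (\<not> x)"
  by (auto simp: bo_def)
lemma bo_eq[simp]: "(bo p = bo q) = (p = q)"
  by (auto simp: bo_def)

lemma code_inj[simp]: "(code p q = code p' q') = (p = p' \<and> q = q')"
proof
  assume h: "code p q = code p' q'"
  have "p = ([] \<in> code p q)" "p' = ([] \<in> code p' q')" by simp_all
  moreover have "q = ([undefined] \<in> code p q)" "q' = ([undefined] \<in> code p' q')" by simp_all
  ultimately show "p = p' \<and> q = q'" using h by metis
qed simp

definition D2 :: "('o set, 'm list set) category" where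
  "D2 = \<lparr>Obj = {bo p | p. True}, Arr = {code p q | p q. True},
         Dom = (\<lambda>m. bo ([] \<in> m)), Cod = (\<lambda>m. bo ([undefined] \<in> m)),
         Idt = (\<lambda>ob. code (ob = UNIV) (ob = UNIV)),
         Cmp = (\<lambda>g f. code ([] \<in> f) ([undefined] \<in> g))\<rparr>"

lemma D2_cat: "is_category D2"
  unfolding is_category_def D2_def by auto

definition ind :: "('a,'b) category \<Rightarrow> ('a \<Rightarrow> bool) \<Rightarrow> ('a,'b,'o set,'m list set) funct" where
  "ind X Q = \<lparr>fobj = (\<lambda>x. bo (Q x)), farr = (\<lambda>f. code (Q (Dom X f)) (Q (Cod X f)))\<rparr>"

lemma ind_functor: "is_category X \<Longrightarrow> is_functor X D2 (ind X Q)"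
  unfolding is_functor_def ind_def D2_def is_category_def by auto


lemma lens_functor: "is_lens X Y L \<Longrightarrow> is_functor X Y L"
  by (simp add: is_lens_def)

lemma functor_U[simp]: "is_functor X Y (U L) = is_functor X Y L"
  by (simp add: is_functor_def U_def)

lemma invar:
  fixes A :: "('oa,'ma) category" and B :: "('ob,'mb) category" and C :: "('oc,'mc) category"
    and F1 F2 :: "('oa,'ma,'ob,'mb) lens" and E :: "('ob,'mb,'oc,'mc) lens"
  assumes "is_category B" and "is_lens A B F1" and "is_lens A B F2" and cA: "is_category A"
    and co: "cat_coequaliser TYPE('ob set) TYPE('mb list set) A B C (U F1) (U F2) (U E)"
    and closed: "\<forall>a\<in>Obj A. P (fobj F1 a) = P (fobj F2 a)"
    and b: "b \<in> Obj B" "b' \<in> Obj B" "fobj E b = fobj E b'" "P b"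
  shows "P b'"
proof -
  let ?G = "ind B P :: ('ob,'mb,'ob set,'mb list set) funct"
  have G: "is_functor B D2 ?G" using assms(1) by (rule ind_functor)
  have f1: "is_functor A B F1" "is_functor A B F2" using assms(2,3) lens_functor by auto
  have eqA: "functor_eq A D2 (functor_comp ?G (U F1)) (functor_comp ?G (U F2))"
    using f1 closed cA unfolding functor_eq_def functor_comp_def ind_def U_def is_functor_def
      is_category_def by auto
  then obtain K :: "('oc,'mc,'ob set,'mb list set) funct" where
    "functor_eq B D2 (functor_comp K (U E)) ?G"
    using co[unfolded cat_coequaliser_def, THEN conjunct2, THEN conjunct2, rule_format,
      OF conjI[OF D2_cat conjI[OF G eqA]]] by blast
  then have h: "\<forall>a\<in>Obj B. fobj K (fobj E a) = bo (P a)"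
    unfolding functor_eq_def functor_comp_def ind_def U_def by simp
  have "fobj K (fobj E b) = bo (P b)" "fobj K (fobj E b') = bo (P b')"
    using h b(1,2) by blast+
  then have "bo (P b) = bo (P b')" using b(3) by simp
  then show ?thesis using b by simp
qed

lemma surj:
  fixes A :: "('oa,'ma) category" and B :: "('ob,'mb) category" and C :: "('oc,'mc) category"
    and F1 F2 :: "('oa,'ma,'ob,'mb) lens" and E :: "('ob,'mb,'oc,'mc) lens"
  assumes "is_category B" and "is_category C" and "is_lens B C E"
    and co: "cat_coequaliser TYPE('ob set) TYPE('mb list set) A B C (U F1) (U F2) (U E)"
    and c: "c \<in> Obj C"
  shows "\<exists>b\<in>Obj B. fobj E b = c"
proof -
  let ?G = "ind B (\<lambda>_. True) :: ('ob,'mb,'ob set,'mb list set) funct"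
  let ?K1 = "ind C (\<lambda>_. True) :: ('oc,'mc,'ob set,'mb list set) funct"
  let ?K2 = "ind C (\<lambda>c. \<exists>b\<in>Obj B. fobj E b = c) :: ('oc,'mc,'ob set,'mb list set) funct"
  have G: "is_functor B D2 ?G" using assms(1) by (rule ind_functor)
  have K1: "is_functor C D2 ?K1" using assms(2) by (rule ind_functor)
  have K2: "is_functor C D2 ?K2" using assms(2) by (rule ind_functor)
  have fE: "is_functor B C E" using assms(3) lens_functor by auto
  have eqA: "functor_eq A D2 (functor_comp ?G (U F1)) (functor_comp ?G (U F2))"
    unfolding functor_eq_def functor_comp_def ind_def U_def by auto
  then obtain K :: "('oc,'mc,'ob set,'mb list set) funct" where
    K: "\<forall>K' :: ('oc,'mc,'ob set,'mb list set) funct. is_functor C D2 K' \<and> functor_eq B D2 (functor_comp K' (U E)) ?G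
              \<longrightarrow> functor_eq C D2 K' K"
    using co[unfolded cat_coequaliser_def, THEN conjunct2, THEN conjunct2, rule_format,
      OF conjI[OF D2_cat conjI[OF G eqA]]] by blast
  have e1: "functor_eq B D2 (functor_comp ?K1 (U E)) ?G"
    unfolding functor_eq_def functor_comp_def ind_def U_def by auto
  have e2: "functor_eq B D2 (functor_comp ?K2 (U E)) ?G"
    using fE assms(1) unfolding is_category_def functor_eq_def functor_comp_def ind_def U_def is_functor_def by auto
  have "functor_eq C D2 ?K1 K" "functor_eq C D2 ?K2 K" using K K1 K2 e1 e2 by blast+
  then have "fobj ?K1 c = fobj ?K2 c" using c unfolding functor_eq_def by auto
  then show ?thesis unfolding ind_def by simp
qed

lemma fobjD: "is_functor X Y F \<Longrightarrow> a \<in> Obj X \<Longrightarrow> fobj F a \<in> Obj Y"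
  by (simp add: is_functor_def)
lemma farrD: "is_functor X Y F \<Longrightarrow> f \<in> Arr X \<Longrightarrow>
   farr F f \<in> Arr Y \<and> Dom Y (farr F f) = fobj F (Dom X f) \<and> Cod Y (farr F f) = fobj F (Cod X f)"
  by (simp add: is_functor_def)
lemma fidD: "is_functor X Y F \<Longrightarrow> a \<in> Obj X \<Longrightarrow> farr F (Idt X a) = Idt Y (fobj F a)"
  by (simp add: is_functor_def)
lemma fcmpD: "is_functor X Y F \<Longrightarrow> f \<in> Arr X \<Longrightarrow> g \<in> Arr X \<Longrightarrow> Cod X f = Dom X g \<Longrightarrow>
   farr F (Cmp X g f) = Cmp Y (farr F g) (farr F f)"
  by (simp add: is_functor_def)
lemma putD: "is_lens X Y L \<Longrightarrow> a \<in> Obj X \<Longrightarrow> b \<in> Arr Y \<Longrightarrow> Dom Y b = fobj L a \<Longrightarrow>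
   put L a b \<in> Arr X \<and> Dom X (put L a b) = a \<and> farr L (put L a b) = b"
  by (simp add: is_lens_def)
lemma putidD: "is_lens X Y L \<Longrightarrow> a \<in> Obj X \<Longrightarrow> put L a (Idt Y (fobj L a)) = Idt X a"
  by (simp add: is_lens_def)
lemma putcmpD: "is_lens X Y L \<Longrightarrow> a \<in> Obj X \<Longrightarrow> b \<in> Arr Y \<Longrightarrow> b' \<in> Arr Y \<Longrightarrow>
   Dom Y b = fobj L a \<Longrightarrow> Dom Y b' = fobj L (Cod X (put L a b)) \<Longrightarrow>
   put L a (Cmp Y b' b) = Cmp X (put L (Cod X (put L a b)) b') (put L a b)"
  by (simp add: is_lens_def)

theorem theorem4p5:
  fixes A :: "('oa,'ma) category" and B :: "('ob,'mb) category" and C :: "('oc,'mc) category"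
    and F1 F2 :: "('oa,'ma,'ob,'mb) lens" and E :: "('ob,'mb,'oc,'mc) lens"
  assumes "is_category A" and "is_category B" and "is_category C"
    and "is_lens A B F1" and "is_lens A B F2" and "is_lens B C E"
    and "lens_eq A C (lens_comp E F1) (lens_comp E F2)"
    and "cat_coequaliser TYPE('do) TYPE('dm) A B C (U F1) (U F2) (U E)"
    and "cat_coequaliser TYPE('ob set) TYPE('mb list set) A B C (U F1) (U F2) (U E)"
  shows "lens_coequaliser TYPE('do) TYPE('dm) A B C F1 F2 E \<longleftrightarrow>
    (\<forall>(D :: ('do,'dm) category) (G :: ('ob,'mb,'do,'dm) lens).
       is_category D \<and> is_lens B D G \<and> lens_eq A D (lens_comp G F1) (lens_comp G F2) \<longrightarrow>
       (\<forall>b\<in>Obj B. \<forall>d\<in>Arr D. Dom D d = fobj G b \<longrightarrow>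
          put G b d = put E b (farr E (put G b d))))"
proof
  assume L: "lens_coequaliser TYPE('do) TYPE('dm) A B C F1 F2 E"
  show "\<forall>(D :: ('do,'dm) category) (G :: ('ob,'mb,'do,'dm) lens).
       is_category D \<and> is_lens B D G \<and> lens_eq A D (lens_comp G F1) (lens_comp G F2) \<longrightarrow>
       (\<forall>b\<in>Obj B. \<forall>d\<in>Arr D. Dom D d = fobj G b \<longrightarrow>
          put G b d = put E b (farr E (put G b d)))"
  proof (intro allI impI ballI)
    fix D :: "('do,'dm) category" and G :: "('ob,'mb,'do,'dm) lens" and b d
    assume H: "is_category D \<and> is_lens B D G \<and> lens_eq A D (lens_comp G F1) (lens_comp G F2)"
      and b: "b \<in> Obj B" and d: "d \<in> Arr D" and dd: "Dom D d = fobj G b"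
    obtain K :: "('oc,'mc,'do,'dm) lens" where K: "is_lens C D K" "lens_eq B D (lens_comp K E) G"
      using L H unfolding lens_coequaliser_def by blast
    have Eb: "fobj E b \<in> Obj C" using fobjD[OF lens_functor[OF assms(6)] b] .
    have KE: "fobj K (fobj E b) = fobj G b"
      using K(2) b unfolding lens_eq_def functor_eq_def lens_comp_def by simp
    have pe: "put E b (put K (fobj E b) d) = put G b d"
      using K(2) b d dd KE unfolding lens_eq_def lens_comp_def by simp
    have x: "put K (fobj E b) d \<in> Arr C \<and> Dom C (put K (fobj E b) d) = fobj E b"
      using putD[OF K(1) Eb d] dd KE by simp
    have "farr E (put G b d) = put K (fobj E b) d"
      using putD[OF assms(6) b] x pe by metis
    then show "put G b d = put E b (farr E (put G b d))" using pe by simp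
  qed
next
  assume R: "\<forall>(D :: ('do,'dm) category) (G :: ('ob,'mb,'do,'dm) lens).
       is_category D \<and> is_lens B D G \<and> lens_eq A D (lens_comp G F1) (lens_comp G F2) \<longrightarrow>
       (\<forall>b\<in>Obj B. \<forall>d\<in>Arr D. Dom D d = fobj G b \<longrightarrow>
          put G b d = put E b (farr E (put G b d)))"
  have fE: "is_functor B C E" using assms(6) by (rule lens_functor)
  have fF1: "is_functor A B F1" using assms(4) by (rule lens_functor)
  have fF2: "is_functor A B F2" using assms(5) by (rule lens_functor)
  define ch where "ch c = (SOME b. b \<in> Obj B \<and> fobj E b = c)" for c
  have ch: "ch c \<in> Obj B \<and> fobj E (ch c) = c" if "c \<in> Obj C" for c
  proof -
    have "\<exists>b\<in>Obj B. fobj E b = c"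
      using surj[OF assms(2,3,6,9) that] .
    then show ?thesis unfolding ch_def by (metis (mono_tags, lifting) someI_ex)
  qed
  show "lens_coequaliser TYPE('do) TYPE('dm) A B C F1 F2 E"
    unfolding lens_coequaliser_def
  proof (intro conjI allI impI)
    show "is_lens B C E" by (rule assms(6))
    show "lens_eq A C (lens_comp E F1) (lens_comp E F2)" by (rule assms(7))
    fix D :: "('do,'dm) category" and G :: "('ob,'mb,'do,'dm) lens"
    assume H: "is_category D \<and> is_lens B D G \<and> lens_eq A D (lens_comp G F1) (lens_comp G F2)"
    have D: "is_category D" and G: "is_lens B D G" and GF: "lens_eq A D (lens_comp G F1) (lens_comp G F2)"
      using H by auto
    have fG: "is_functor B D G" using G by (rule lens_functor)
    have fe: "functor_eq A D (functor_comp (U G) (U F1)) (functor_comp (U G) (U F2))"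
      using GF unfolding lens_eq_def functor_eq_def lens_comp_def functor_comp_def U_def by simp
    obtain K0 :: "('oc,'mc,'do,'dm) funct" where
      K0: "is_functor C D K0" "functor_eq B D (functor_comp K0 (U E)) (U G)"
      and uniq: "\<forall>K' :: ('oc,'mc,'do,'dm) funct. is_functor C D K' \<and>
                   functor_eq B D (functor_comp K' (U E)) (U G) \<longrightarrow> functor_eq C D K' K0"
      using assms(8)[unfolded cat_coequaliser_def, THEN conjunct2, THEN conjunct2, rule_format,
        OF conjI[OF D conjI[OF _ fe]]] fG by auto
    have gEo: "fobj K0 (fobj E b) = fobj G b" if "b \<in> Obj B" for b
      using K0(2) that unfolding functor_eq_def functor_comp_def U_def by simp
    have gEa: "farr K0 (farr E f) = farr G f" if "f \<in> Arr B" for f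
      using K0(2) that unfolding functor_eq_def functor_comp_def U_def by simp
    have inv: "farr E (put G y d) = farr E (put G x d) \<and> fobj G y = fobj G x"
      if xy: "x \<in> Obj B" "y \<in> Obj B" "fobj E x = fobj E y" and d: "d \<in> Arr D" "Dom D d = fobj G x"
      for x y d
    proof -
      let ?P = "\<lambda>z. fobj G z = fobj G x \<and> farr E (put G z d) = farr E (put G x d)"
      have closed: "\<forall>a\<in>Obj A. ?P (fobj F1 a) = ?P (fobj F2 a)"
      proof
        fix a assume a: "a \<in> Obj A"
        have a1: "fobj F1 a \<in> Obj B" and a2: "fobj F2 a \<in> Obj B"
          using fobjD[OF fF1 a] fobjD[OF fF2 a] .
        have Geq: "fobj G (fobj F1 a) = fobj G (fobj F2 a)"
          using GF a unfolding lens_eq_def functor_eq_def lens_comp_def by simp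
        have key: "farr E (put G (fobj F1 a) d) = farr E (put G (fobj F2 a) d)"
          if h: "fobj G (fobj F1 a) = fobj G x"
        proof -
          have dd1: "Dom D d = fobj G (fobj F1 a)" using h d by simp
          have peq: "put F1 a (put G (fobj F1 a) d) = put F2 a (put G (fobj F2 a) d)"
            using GF a d(1) dd1 unfolding lens_eq_def lens_comp_def by simp
          have p1: "put G (fobj F1 a) d \<in> Arr B \<and> Dom B (put G (fobj F1 a) d) = fobj F1 a"
            using putD[OF G a1 d(1) dd1] by simp
          have p2: "put G (fobj F2 a) d \<in> Arr B \<and> Dom B (put G (fobj F2 a) d) = fobj F2 a"
            using putD[OF G a2 d(1)] dd1 Geq by simp
          have q1: "put F1 a (put G (fobj F1 a) d) \<in> Arr A \<and> farr F1 (put F1 a (put G (fobj F1 a) d)) = put G (fobj F1 a) d"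
            using putD[OF assms(4) a] p1 by simp
          have q2: "farr F2 (put F2 a (put G (fobj F2 a) d)) = put G (fobj F2 a) d"
            using putD[OF assms(5) a] p2 by simp
          have "farr E (farr F1 al) = farr E (farr F2 al)" if "al \<in> Arr A" for al
            using assms(7) that unfolding lens_eq_def functor_eq_def lens_comp_def by simp
          then show ?thesis using q1 q2 peq by metis
        qed
        show "?P (fobj F1 a) = ?P (fobj F2 a)" using key Geq by auto
      qed
      have "?P y" using invar[OF assms(2,4,5,1,9) closed xy(1,2,3)] by simp
      then show ?thesis by simp
    qed
    define K :: "('oc,'mc,'do,'dm) lens" where
      "K = \<lparr>fobj = fobj K0, farr = farr K0, put = (\<lambda>c d. farr E (put G (ch c) d))\<rparr>"
    have Ko[simp]: "fobj K = fobj K0" and Ka[simp]: "farr K = farr K0"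
      and Kp: "put K c d = farr E (put G (ch c) d)" for c d
      unfolding K_def by simp_all
    have fK: "is_functor C D K" using K0(1) unfolding is_functor_def by simp
    have lK: "is_lens C D K"
      unfolding is_lens_def
    proof (intro conjI ballI impI)
      show "is_functor C D K" by (rule fK)
    next
      fix c d assume c: "c \<in> Obj C" and d: "d \<in> Arr D" and dd: "Dom D d = fobj K c"
      have b: "ch c \<in> Obj B" "fobj E (ch c) = c" using ch[OF c] by auto
      have dd': "Dom D d = fobj G (ch c)" using dd gEo[OF b(1)] b(2) by simp
      have p: "put G (ch c) d \<in> Arr B \<and> Dom B (put G (ch c) d) = ch c \<and> farr G (put G (ch c) d) = d"
        using putD[OF G b(1) d dd'] .
      show "put K c d \<in> Arr C" using farrD[OF fE] p Kp by simp
      show "Dom C (put K c d) = c" using farrD[OF fE] p Kp b by simp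
      show "farr K (put K c d) = d" using gEa p Kp by simp
    next
      fix c assume c: "c \<in> Obj C"
      have b: "ch c \<in> Obj B" "fobj E (ch c) = c" using ch[OF c] by auto
      have "put K c (Idt D (fobj K c)) = farr E (put G (ch c) (Idt D (fobj G (ch c))))"
        using Kp gEo[OF b(1)] b(2) by simp
      also have "\<dots> = farr E (Idt B (ch c))" using putidD[OF G b(1)] by simp
      also have "\<dots> = Idt C c" using fidD[OF fE b(1)] b(2) by simp
      finally show "put K c (Idt D (fobj K c)) = Idt C c" .
    next
      fix c d d' assume c: "c \<in> Obj C" and d: "d \<in> Arr D" and d': "d' \<in> Arr D"
        and dd: "Dom D d = fobj K c" and dd2: "Dom D d' = fobj K (Cod C (put K c d))"
      have b: "ch c \<in> Obj B" "fobj E (ch c) = c" using ch[OF c] by auto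
      define p where "p = put G (ch c) d"
      have dd': "Dom D d = fobj G (ch c)" using dd gEo[OF b(1)] b(2) by simp
      have p: "p \<in> Arr B \<and> Dom B p = ch c \<and> farr G p = d"
        using putD[OF G b(1) d dd'] p_def by simp
      define b1 where "b1 = Cod B p"
      have b1: "b1 \<in> Obj B" using p assms(2) b1_def unfolding is_category_def by blast
      have cod: "Cod C (put K c d) = fobj E b1" using farrD[OF fE] p Kp p_def b1_def by simp
      have c1: "fobj E b1 \<in> Obj C" using fobjD[OF fE b1] .
      have b': "ch (fobj E b1) \<in> Obj B" "fobj E (ch (fobj E b1)) = fobj E b1" using ch[OF c1] by auto
      have dd3: "Dom D d' = fobj G b1" using dd2 cod gEo[OF b1] by simp
      have q: "put G b1 d' \<in> Arr B \<and> Dom B (put G b1 d') = b1"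
        using putD[OF G b1 d' dd3] by simp
      have "put K c (Cmp D d' d) = farr E (put G (ch c) (Cmp D d' d))" using Kp by simp
      also have "\<dots> = farr E (Cmp B (put G b1 d') p)"
        using putcmpD[OF G b(1) d d' dd'] dd3 p_def b1_def by simp
      also have "\<dots> = Cmp C (farr E (put G b1 d')) (farr E p)"
        using fcmpD[OF fE] p q b1_def by simp
      also have "farr E (put G b1 d') = put K (Cod C (put K c d)) d'"
        using Kp cod inv[OF b1 b'(1) b'(2)[symmetric] d' dd3] by simp
      also have "farr E p = put K c d" using Kp p_def by simp
      finally show "put K c (Cmp D d' d) = Cmp C (put K (Cod C (put K c d)) d') (put K c d)" .
    qed
    have eqK: "lens_eq B D (lens_comp K E) G"
      unfolding lens_eq_def functor_eq_def
    proof (intro conjI ballI impI)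
      fix b assume b: "b \<in> Obj B"
      show "fobj (lens_comp K E) b = fobj G b" using gEo[OF b] unfolding lens_comp_def by simp
    next
      fix f assume f: "f \<in> Arr B"
      show "farr (lens_comp K E) f = farr G f" using gEa[OF f] unfolding lens_comp_def by simp
    next
      fix b d assume b: "b \<in> Obj B" and d: "d \<in> Arr D" and dd: "Dom D d = fobj (lens_comp K E) b"
      have dd': "Dom D d = fobj G b" using dd gEo[OF b] unfolding lens_comp_def by simp
      have c: "fobj E b \<in> Obj C" using fobjD[OF fE b] .
      have b': "ch (fobj E b) \<in> Obj B" "fobj E (ch (fobj E b)) = fobj E b" using ch[OF c] by auto
      have "put (lens_comp K E) b d = put E b (farr E (put G (ch (fobj E b)) d))"
        unfolding lens_comp_def using Kp by simp
      also have "\<dots> = put E b (farr E (put G b d))"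
        using inv[OF b b'(1) b'(2)[symmetric] d dd'] by simp
      also have "\<dots> = put G b d" using R H b d dd' by metis
      finally show "put (lens_comp K E) b d = put G b d" .
    qed
    have unK: "lens_eq C D K' K" if K': "is_lens C D K'" "lens_eq B D (lens_comp K' E) G"
      for K' :: "('oc,'mc,'do,'dm) lens"
    proof -
      have "is_functor C D (U K')" using lens_functor[OF K'(1)] by simp
      moreover have "functor_eq B D (functor_comp (U K') (U E)) (U G)"
        using K'(2) unfolding lens_eq_def functor_eq_def lens_comp_def functor_comp_def U_def by simp
      ultimately have fe': "functor_eq C D (U K') K0" using uniq by blast
      have "put K' c d = put K c d"
        if c: "c \<in> Obj C" and d: "d \<in> Arr D" and dd: "Dom D d = fobj K' c" for c d
      proof -
        have b: "ch c \<in> Obj B" "fobj E (ch c) = c" using ch[OF c] by auto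
        have all: "\<forall>a\<in>Obj B. \<forall>b\<in>Arr D. Dom D b = fobj K' (fobj E a) \<longrightarrow>
            put E a (put K' (fobj E a) b) = put G a b"
          using K'(2) unfolding lens_eq_def lens_comp_def by simp
        have pe: "put E (ch c) (put K' c d) = put G (ch c) d"
          using all b d dd by metis
        have x: "put K' c d \<in> Arr C \<and> Dom C (put K' c d) = fobj E (ch c)"
          using putD[OF K'(1) c d dd] b by simp
        have "farr E (put G (ch c) d) = put K' c d"
          using putD[OF assms(6) b(1)] x pe by metis
        then show ?thesis using Kp by simp
      qed
      then show ?thesis using fe' unfolding lens_eq_def functor_eq_def U_def by simp
    qed
    show "\<exists>K :: ('oc,'mc,'do,'dm) lens. is_lens C D K \<and> lens_eq B D (lens_comp K E) G \<and>
           (\<forall>K' :: ('oc,'mc,'do,'dm) lens. is_lens C D K' \<and> lens_eq B D (lens_comp K' E) G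
              \<longrightarrow> lens_eq C D K' K)"
      using lK eqK unK by blast
  qed
qed

end
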